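(* Let $G_0$ be a connected graph with two distinct vertices $x,y$ such that $d_{G_0}(x)\in\{2,3\}$ and $d_{G_0}(y)\in\{2,3\}$. Let $P_1=u_1u_2\cdots u_k$ ($k\ge1$) and $P_2=v_1v_2\cdots v_l$ ($l\ge1$) be paths, vertex-disjoint from each other and from $G_0$. Let $G_1$ be the graph obtained from the disjoint union of $G_0,P_1,P_2$ by adding the edges $u_1x$ and $v_1y$, and let $G_2=G_1-u_1x+u_1v_l$. Then $SO(G_1)>SO(G_2)$ and $SO_{red}(G_1)>SO_{red}(G_2)$.
   Context: $d_G(u)$ denotes the degree of $u$ in $G$. $SO(G)=\sum_{uv\in E(G)}\sqrt{d_G(u)^2+d_G(v)^2}$ and $SO_{red}(G)=\sum_{uv\in E(G)}\sqrt{(d_G(u)-1)^2+(d_G(v)-1)^2}$. *)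

theory Defs
  imports Complex_Main
begin

definition simple_graph :: "'a set \<Rightarrow> 'a set set \<Rightarrow> bool" where
  "simple_graph V E \<longleftrightarrow> finite V \<and> (\<forall>e\<in>E. e \<subseteq> V \<and> card e = 2)"

definition adj_rel :: "'a set set \<Rightarrow> ('a \<times> 'a) set" where
  "adj_rel E = {(a, b). {a, b} \<in> E}"

definition connected_graph :: "'a set \<Rightarrow> 'a set set \<Rightarrow> bool" where
  "connected_graph V E \<longleftrightarrow> simple_graph V E \<and> V \<noteq> {} \<and>
     (\<forall>u\<in>V. \<forall>w\<in>V. (u, w) \<in> (adj_rel E)\<^sup>*)"

definition deg :: "'a set set \<Rightarrow> 'a \<Rightarrow> nat" where
  "deg E v = card {e \<in> E. v \<in> e}"

definition SO :: "'a set set \<Rightarrow> real" where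
  "SO E = (\<Sum>e\<in>E. sqrt (\<Sum>w\<in>e. (real (deg E w))\<^sup>2))"

definition SO_red :: "'a set set \<Rightarrow> real" where
  "SO_red E = (\<Sum>e\<in>E. sqrt (\<Sum>w\<in>e. (real (deg E w) - 1)\<^sup>2))"

definition path_edges :: "'a list \<Rightarrow> 'a set set" where
  "path_edges xs = {{xs ! i, xs ! Suc i} | i. Suc i < length xs}"

end

theory Submission
  imports Defs
begin

lemma sqrt_add_less:
  fixes A B C D :: real
  assumes "A \<ge> 0" "B \<ge> 0" "C \<ge> 0" "D \<ge> 0" "A + B \<le> C + D" "A * B < C * D"
  shows "sqrt A + sqrt B < sqrt C + sqrt D"
proof -
  have m: "sqrt A * sqrt B < sqrt C * sqrt D"
    using assms by (metis real_sqrt_less_mono real_sqrt_mult)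
  have "(sqrt A + sqrt B)^2 = A + B + 2 * (sqrt A * sqrt B)"
    using assms by (simp add: power2_eq_square algebra_simps)
  also have "\<dots> < C + D + 2 * (sqrt C * sqrt D)" using m assms(5) by linarith
  also have "\<dots> = (sqrt C + sqrt D)^2"
    using assms by (simp add: power2_eq_square algebra_simps)
  finally show ?thesis
    by (rule power_less_imp_less_base) (use assms in auto)
qed

lemma num1:
  fixes D X c :: real
  assumes "D = 1 \<or> D = 2" "X \<ge> 3" "c \<ge> 2"
  shows "sqrt (D^2 + 2^2) + sqrt (c^2 + 2^2) < sqrt (D^2 + X^2) + sqrt (c^2 + 1^2)"
proof -
  have X2: "X^2 \<ge> 9" using power_mono[OF assms(2), of 2] by simp
  have c2: "c^2 \<ge> 4" using power_mono[OF assms(3), of 2] by simp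
  have "sqrt (D^2 + 2^2) + sqrt (c^2 + 2^2) < sqrt (D^2 + 9) + sqrt (c^2 + 1^2)"
  proof (rule sqrt_add_less)
    show "D\<^sup>2 + 2\<^sup>2 + (c\<^sup>2 + 2\<^sup>2) \<le> D\<^sup>2 + 9 + (c\<^sup>2 + 1\<^sup>2)" by simp
    show "(D\<^sup>2 + 2\<^sup>2) * (c\<^sup>2 + 2\<^sup>2) < (D\<^sup>2 + 9) * (c\<^sup>2 + 1\<^sup>2)"
      using assms(1) c2 by auto
  qed auto
  also have "\<dots> \<le> sqrt (D^2 + X^2) + sqrt (c^2 + 1^2)" using X2 by simp
  finally show ?thesis .
qed

lemma num2:
  fixes D X c :: real
  assumes "D = 1 \<or> D = 2" "X \<ge> 3" "c \<ge> 2"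
  shows "sqrt ((D-1)^2 + (2-1)^2) + sqrt ((c-1)^2 + (2-1)^2) < sqrt ((D-1)^2 + (X-1)^2) + sqrt ((c-1)^2 + (1-1)^2)"
proof -
  have X2: "(X-1)^2 \<ge> 4" using power_mono[of 2 "X-1" 2] assms(2) by simp
  have c2: "(c-1)^2 \<ge> 1" using power_mono[of 1 "c-1" 2] assms(3) by simp
  have "sqrt ((D-1)^2 + (2-1)^2) + sqrt ((c-1)^2 + (2-1)^2) < sqrt ((D-1)^2 + 4) + sqrt ((c-1)^2 + (1-1)^2)"
  proof (rule sqrt_add_less)
    show "(D-1)\<^sup>2 + (2-1)\<^sup>2 + ((c-1)\<^sup>2 + (2-1)\<^sup>2) \<le> (D-1)\<^sup>2 + 4 + ((c-1)\<^sup>2 + (1-1)\<^sup>2)" by simp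
    show "((D-1)\<^sup>2 + (2-1)\<^sup>2) * ((c-1)\<^sup>2 + (2-1)\<^sup>2) < ((D-1)\<^sup>2 + 4) * ((c-1)\<^sup>2 + (1-1)\<^sup>2)"
      using assms(1) c2 by auto
  qed auto
  also have "\<dots> \<le> sqrt ((D-1)^2 + (X-1)^2) + sqrt ((c-1)^2 + (1-1)^2)" using X2 by simp
  finally show ?thesis .
qed


lemma deg_swap:
  assumes fin: "finite E" and p: "p \<in> E" and q: "q \<notin> E"
  shows "deg ((E - {p}) \<union> {q}) w + (if w \<in> p then 1 else 0) = deg E w + (if w \<in> q then 1 else 0)"
proof -
  let ?A = "{e\<in>E. w\<in>e}"
  have fA: "finite ?A" using fin by simp
  have qA: "q \<notin> ?A - {p}" using q by auto
  have c1: "card {e \<in> (E - {p}) \<union> {q}. w \<in> e} = card (?A - {p}) + (if w\<in>q then 1 else 0)"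
  proof (cases "w \<in> q")
    case True
    then have "{e \<in> (E - {p}) \<union> {q}. w \<in> e} = insert q (?A - {p})" by auto
    then show ?thesis using True qA fA by simp
  next
    case False
    then have "{e \<in> (E - {p}) \<union> {q}. w \<in> e} = ?A - {p}" by auto
    then show ?thesis using False by simp
  qed
  have c2: "card (?A - {p}) + (if w \<in> p then 1 else 0) = card ?A"
  proof (cases "w \<in> p")
    case True
    then have pA: "p \<in> ?A" using p by auto
    then have "card (?A - {p}) = card ?A - 1" using fA by (simp add: card_Diff_singleton)
    moreover have "card ?A > 0" using pA fA card_gt_0_iff by blast
    ultimately show ?thesis using True by simp
  next
    case False
    then have "?A - {p} = ?A" by auto
    then show ?thesis using False by simp
  qed
  show ?thesis unfolding deg_def using c1 c2 by simp
qed

lemma path_edges_image: "path_edges xs = (\<lambda>i. {xs!i, xs!Suc i}) ` {i. Suc i < length xs}"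
  unfolding path_edges_def by (rule setcompr_eq_image)

lemma finite_path_edges: "finite (path_edges xs)"
proof -
  have "{i. Suc i < length xs} \<subseteq> {..<length xs}" by auto
  then have "finite {i. Suc i < length xs}" using finite_subset by blast
  then show ?thesis unfolding path_edges_image by simp
qed

lemma path_edges_sub: "e \<in> path_edges xs \<Longrightarrow> e \<subseteq> set xs"
  unfolding path_edges_def by auto

lemma path_edges_at:
  assumes "distinct xs" "e \<in> path_edges xs" "xs!j \<in> e" "j < length xs"
  shows "\<exists>i. Suc i < length xs \<and> e = {xs!i, xs!Suc i} \<and> (j = i \<or> j = Suc i)"
proof -
  obtain i where i: "Suc i < length xs" "e = {xs!i, xs!Suc i}" using assms(2) unfolding path_edges_def by auto
  then have "xs!j = xs!i \<or> xs!j = xs!Suc i" using assms(3) by auto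
  then have "j = i \<or> j = Suc i" using assms(1,4) i(1) by (auto simp: nth_eq_iff_index_eq)
  then show ?thesis using i by blast
qed

lemma decomp:
  fixes f1 f2 :: "'a set \<Rightarrow> real"
  assumes "finite E1" "p \<in> E1" "q \<notin> E1" "g \<in> E1" "g \<noteq> p"
  shows "sum f1 E1 - sum f2 ((E1 - {p}) \<union> {q}) = f1 p - f2 q + (f1 g - f2 g) + sum (\<lambda>e. f1 e - f2 e) (E1 - {p} - {g})"
proof -
  have a: "sum f1 E1 = f1 p + (f1 g + sum f1 (E1 - {p} - {g}))"
    using assms by (simp add: sum.remove[of E1 p] sum.remove[of "E1 - {p}" g])
  have "(E1 - {p}) \<union> {q} = insert q (E1 - {p})" by auto
  then have b: "sum f2 ((E1 - {p}) \<union> {q}) = f2 q + (f2 g + sum f2 (E1 - {p} - {g}))"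
    using assms by (simp add: sum.remove[of "E1 - {p}" g])
  show ?thesis unfolding a b by (simp add: sum_subtractf)
qed



theorem lemma2p4:
  fixes V0 :: "'a set" and E0 :: "'a set set" and x y :: 'a and us vs :: "'a list"
  assumes G0: "connected_graph V0 E0"
    and xy: "x \<in> V0" "y \<in> V0" "x \<noteq> y"
    and dx: "deg E0 x \<in> {2, 3}" and dy: "deg E0 y \<in> {2, 3}"
    and P1: "distinct us" "length us \<ge> 1"
    and P2: "distinct vs" "length vs \<ge> 1"
    and disj: "set us \<inter> set vs = {}" "set us \<inter> V0 = {}" "set vs \<inter> V0 = {}"
    and E1_def: "E1 = E0 \<union> path_edges us \<union> path_edges vs \<union> {{hd us, x}, {hd vs, y}}"
    and E2_def: "E2 = (E1 - {{hd us, x}}) \<union> {{hd us, last vs}}"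
  shows "SO E1 > SO E2 \<and> SO_red E1 > SO_red E2"
proof -
  define u1 where "u1 = hd us"
  define vl where "vl = last vs"
  define l where "l = length vs"
  define p where "p = {u1, x}"
  define q where "q = {u1, vl}"
  have E0V: "\<And>e. e \<in> E0 \<Longrightarrow> e \<subseteq> V0" and finV: "finite V0"
    using G0 unfolding connected_graph_def simple_graph_def by auto
  have fin0: "finite E0"
  proof -
    have "E0 \<subseteq> Pow V0" using E0V by auto
    then show ?thesis using finV by (meson finite_Pow_iff finite_subset)
  qed
  have E1': "E1 = E0 \<union> path_edges us \<union> path_edges vs \<union> {p, {hd vs, y}}"
    unfolding E1_def p_def u1_def ..
  have E2': "E2 = (E1 - {p}) \<union> {q}" unfolding E2_def p_def q_def u1_def vl_def ..
  have fin1: "finite E1" unfolding E1' using fin0 by (simp add: finite_path_edges)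
  have usne: "us \<noteq> []" using P1 by auto
  have vsne: "vs \<noteq> []" using P2 by auto
  have u1us: "u1 = us!0" "u1 \<in> set us" unfolding u1_def using usne by (auto simp: hd_conv_nth)
  have vlvs: "vl = vs!(l-1)" "vl \<in> set vs" unfolding vl_def l_def using vsne by (auto simp: last_conv_nth)
  have hdvs: "hd vs = vs!0" "hd vs \<in> set vs" using vsne by (auto simp: hd_conv_nth)
  have u1V0: "u1 \<notin> V0" "u1 \<notin> set vs" using u1us disj by auto
  have vlV0: "vl \<notin> V0" "vl \<notin> set us" using vlvs disj by auto
  have hdV0: "hd vs \<notin> V0" "hd vs \<noteq> u1" using hdvs disj u1V0 by auto
  have ne: "u1 \<noteq> vl" "u1 \<noteq> x" "u1 \<noteq> y" "vl \<noteq> x" "vl \<noteq> y"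
    using u1V0 vlV0 vlvs xy by auto
  have pE1: "p \<in> E1" unfolding E1' by simp
  have pE0: "p \<notin> E0" using E0V u1V0 unfolding p_def by auto
  have qE1: "q \<notin> E1"
  proof
    assume "q \<in> E1"
    moreover have "u1 \<in> q" "vl \<in> q" unfolding q_def by auto
    ultimately show False
      using E0V[of q] path_edges_sub[of q us] path_edges_sub[of q vs] u1V0 vlV0 ne hdV0
      unfolding E1' p_def by auto
  qed
  have fin2: "finite E2" unfolding E2' using fin1 by simp
  have ds: "\<And>w. deg E2 w + (if w \<in> p then 1 else 0) = deg E1 w + (if w \<in> q then 1 else 0)"
    unfolding E2' using deg_swap[OF fin1 pE1 qE1] by blast
  have degx: "deg E1 x \<ge> 3"
  proof -
    have "insert p {e\<in>E0. x\<in>e} \<subseteq> {e\<in>E1. x\<in>e}" unfolding E1' p_def by auto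
    then have "card (insert p {e\<in>E0. x\<in>e}) \<le> deg E1 x" unfolding deg_def
      using fin1 by (intro card_mono) auto
    moreover have "card (insert p {e\<in>E0. x\<in>e}) = Suc (deg E0 x)"
      unfolding deg_def using fin0 pE0 by simp
    ultimately show ?thesis using dx by auto
  qed
  have degu: "1 \<le> deg E1 u1" "deg E1 u1 \<le> 2"
  proof -
    have "{e\<in>E1. u1\<in>e} \<subseteq> {p, {us!0, us!1}}"
    proof
      fix e assume e: "e \<in> {e\<in>E1. u1\<in>e}"
      show "e \<in> {p, {us!0, us!1}}"
      proof (cases "e \<in> path_edges us")
        case True
        have e0: "us!0 \<in> e" using e u1us by simp
        have l0: "0 < length us" using usne by simp
        obtain i where "Suc i < length us" "e = {us!i, us!Suc i}" "0 = i \<or> 0 = Suc i"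
          using path_edges_at[OF P1(1) True e0 l0] by blast
        then have "e = {us!0, us!1}" by simp
        then show ?thesis by simp
      next
        case False
        then show ?thesis using e E0V[of e] path_edges_sub[of e vs] u1V0 ne hdV0
          unfolding E1' by auto
      qed
    qed
    moreover have "card {p, {us!0, us!1}} \<le> 2" by (simp add: card_insert_if)
    ultimately show "deg E1 u1 \<le> 2" unfolding deg_def
      by (meson card_mono finite.emptyI finite.insertI order_trans)
    have "p \<in> {e\<in>E1. u1\<in>e}" using pE1 unfolding p_def by auto
    moreover have "finite {e\<in>E1. u1\<in>e}" using fin1 by simp
    ultimately have "card {e\<in>E1. u1\<in>e} > 0" using card_gt_0_iff by blast
    then show "1 \<le> deg E1 u1" unfolding deg_def by simp
  qed
  obtain z where z: "{z, vl} \<in> E1" "z \<noteq> vl" "z \<noteq> x" "z \<noteq> u1" "deg E1 z \<ge> 2"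
     "{e\<in>E1. vl\<in>e} = {{z,vl}}"
  proof (cases "l = 1")
    case True
    then have hv: "hd vs = vl" using vlvs hdvs by simp
    have pv: "path_edges vs = {}" using True unfolding path_edges_def l_def by auto
    have "{y, vl} \<in> E1" unfolding E1' hv by auto
    moreover have "y \<noteq> vl" "y \<noteq> x" "y \<noteq> u1" using ne xy by auto
    moreover have "deg E1 y \<ge> 2"
    proof -
      have "deg E0 y \<le> deg E1 y" unfolding deg_def using fin1 by (intro card_mono) (auto simp: E1')
      then show ?thesis using dy by auto
    qed
    moreover have "{e\<in>E1. vl\<in>e} = {{y,vl}}"
      using E0V vlV0 ne path_edges_sub[of _ us] unfolding E1' pv hv p_def by auto
    ultimately show ?thesis using that by blast
  next
    case False
    then have l2: "l \<ge> 2" using P2 l_def by auto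
    define z where "z = vs!(l-2)"
    have vl': "vl = vs!Suc (l-2)" using vlvs l2 by (simp add: Suc_diff_Suc numeral_2_eq_2)
    have zvs: "z \<in> set vs" unfolding z_def l_def using l2 l_def by auto
    have gE: "{z, vl} \<in> path_edges vs" unfolding path_edges_def z_def vl' l_def using l2 l_def
      by (auto intro!: exI[of _ "l-2"])
    have zvl: "z \<noteq> vl" unfolding z_def vl' using P2(1) l2 l_def by (simp add: nth_eq_iff_index_eq)
    have zx: "z \<noteq> x" "z \<noteq> u1" using zvs disj xy u1V0 by auto
    have edges: "{e\<in>E1. vl\<in>e} = {{z,vl}}"
    proof
      show "{{z,vl}} \<subseteq> {e\<in>E1. vl\<in>e}" using gE unfolding E1' by auto
      show "{e\<in>E1. vl\<in>e} \<subseteq> {{z,vl}}"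
      proof
        fix e assume e: "e \<in> {e\<in>E1. vl\<in>e}"
        show "e \<in> {{z,vl}}"
        proof (cases "e \<in> path_edges vs")
          case True
          have e1: "vs!(l-1) \<in> e" using e vlvs by simp
          have l1: "l-1 < length vs" using l2 l_def by simp
          obtain i where i: "Suc i < length vs" "e = {vs!i, vs!Suc i}" "l-1 = i \<or> l-1 = Suc i"
            using path_edges_at[OF P2(1) True e1 l1] by blast
          then have "i = l - 2" using l_def by auto
          then show ?thesis using i vl' z_def by auto
        next
          case False
          have "vs!(l-1) \<noteq> vs!0" using nth_eq_iff_index_eq[OF P2(1), of "l-1" 0] l2 l_def vsne by simp
          then have "vl \<noteq> hd vs" using hdvs vlvs by simp
          then show ?thesis using False e E0V[of e] path_edges_sub[of e us] vlV0 ne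
            unfolding E1' p_def by auto
        qed
      qed
    qed
    define h where "h = (if l = 2 then {hd vs, y} else {vs!(l-3), z})"
    have hE: "h \<in> E1" "z \<in> h" "vl \<notin> h"
    proof -
      show "h \<in> E1"
      proof (cases "l = 2")
        case True then show ?thesis unfolding h_def E1' by simp
      next
        case False
        then have "z = vs!Suc (l-3)" using l2 z_def by (simp add: numeral_3_eq_3 numeral_2_eq_2 Suc_diff_Suc)
        then have "h \<in> path_edges vs" using False l2 l_def unfolding h_def path_edges_def
          by (auto intro!: exI[of _ "l-3"])
        then show ?thesis unfolding E1' by simp
      qed
      show "z \<in> h" unfolding h_def using hdvs z_def by auto
      show "vl \<notin> h" unfolding h_def using hdvs vlvs ne P2(1) l2 l_def z_def
        by (auto simp: nth_eq_iff_index_eq)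
    qed
    have "{h, {z,vl}} \<subseteq> {e\<in>E1. z\<in>e}" using hE gE unfolding E1' by auto
    moreover have "card {h, {z,vl}} = 2"
    proof -
      have "h \<noteq> {z,vl}" using hE by blast
      then show ?thesis by simp
    qed
    moreover have "finite {e\<in>E1. z\<in>e}" using fin1 by simp
    ultimately have "deg E1 z \<ge> 2" unfolding deg_def using card_mono by metis
    then show ?thesis using that[of z] gE zvl zx edges unfolding E1' by blast
  qed
  define g where "g = {z, vl}"
  have gE1: "g \<in> E1" and gp: "g \<noteq> p" using z ne unfolding g_def p_def by auto
  have dvl1: "deg E1 vl = 1" unfolding deg_def z(6) by simp
  have d2x: "deg E2 x + 1 = deg E1 x" using ds[of x] ne unfolding p_def q_def by auto
  have d2u: "deg E2 u1 = deg E1 u1" using ds[of u1] unfolding p_def q_def by auto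
  have d2vl: "deg E2 vl = 2" using ds[of vl] ne dvl1 unfolding p_def q_def by auto
  have d2z: "deg E2 z = deg E1 z" using ds[of z] ne z unfolding p_def q_def by auto
  have d2le: "\<And>w. w \<noteq> vl \<Longrightarrow> deg E2 w \<le> deg E1 w"
  proof -
    fix w assume w: "w \<noteq> vl"
    have "w \<in> q \<longrightarrow> w \<in> p" using w unfolding p_def q_def by auto
    then show "deg E2 w \<le> deg E1 w" using ds[of w] by (cases "w \<in> q"; cases "w \<in> p") auto
  qed
  have d2ge: "\<And>w e. e \<in> E2 \<Longrightarrow> w \<in> e \<Longrightarrow> deg E2 w \<ge> 1"
  proof -
    fix w e assume "e \<in> E2" "w \<in> e"
    then have "e \<in> {e\<in>E2. w\<in>e}" by simp
    moreover have "finite {e\<in>E2. w\<in>e}" using fin2 by simp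
    ultimately have "card {e\<in>E2. w\<in>e} > 0" using card_gt_0_iff by blast
    then show "deg E2 w \<ge> 1" unfolding deg_def by simp
  qed
  have rest: "\<And>e. e \<in> E1 - {p} - {g} \<Longrightarrow> vl \<notin> e \<and> e \<in> E2"
    using z(6) unfolding g_def E2' by auto
  define F1 where "F1 = (\<lambda>e. sqrt (\<Sum>w\<in>e. (real (deg E1 w))\<^sup>2))"
  define F2 where "F2 = (\<lambda>e. sqrt (\<Sum>w\<in>e. (real (deg E2 w))\<^sup>2))"
  define R1 where "R1 = (\<lambda>e. sqrt (\<Sum>w\<in>e. (real (deg E1 w) - 1)\<^sup>2))"
  define R2 where "R2 = (\<lambda>e. sqrt (\<Sum>w\<in>e. (real (deg E2 w) - 1)\<^sup>2))"
  have dec1: "SO E1 - SO E2 = F1 p - F2 q + (F1 g - F2 g) + sum (\<lambda>e. F1 e - F2 e) (E1 - {p} - {g})"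
  proof -
    have "SO E1 - SO E2 = sum F1 E1 - sum F2 ((E1 - {p}) \<union> {q})"
      unfolding SO_def F1_def F2_def E2'[symmetric] ..
    then show ?thesis using decomp[OF fin1 pE1 qE1 gE1 gp, of F1 F2] by simp
  qed
  have dec2: "SO_red E1 - SO_red E2 = R1 p - R2 q + (R1 g - R2 g) + sum (\<lambda>e. R1 e - R2 e) (E1 - {p} - {g})"
  proof -
    have "SO_red E1 - SO_red E2 = sum R1 E1 - sum R2 ((E1 - {p}) \<union> {q})"
      unfolding SO_red_def R1_def R2_def E2'[symmetric] ..
    then show ?thesis using decomp[OF fin1 pE1 qE1 gE1 gp, of R1 R2] by simp
  qed
  have nn1: "sum (\<lambda>e. F1 e - F2 e) (E1 - {p} - {g}) \<ge> 0"
  proof (rule sum_nonneg)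
    fix e assume "e \<in> E1 - {p} - {g}"
    then have "\<forall>w\<in>e. deg E2 w \<le> deg E1 w" using rest d2le by metis
    then have "(\<Sum>w\<in>e. (real (deg E2 w))\<^sup>2) \<le> (\<Sum>w\<in>e. (real (deg E1 w))\<^sup>2)"
      by (intro sum_mono power_mono) auto
    then show "F1 e - F2 e \<ge> 0" unfolding F1_def F2_def by simp
  qed
  have nn2: "sum (\<lambda>e. R1 e - R2 e) (E1 - {p} - {g}) \<ge> 0"
  proof (rule sum_nonneg)
    fix e assume e: "e \<in> E1 - {p} - {g}"
    then have a: "\<forall>w\<in>e. deg E2 w \<le> deg E1 w" using rest d2le by metis
    have b: "\<forall>w\<in>e. deg E2 w \<ge> 1" using rest[OF e] d2ge by blast
    have "(\<Sum>w\<in>e. (real (deg E2 w) - 1)\<^sup>2) \<le> (\<Sum>w\<in>e. (real (deg E1 w) - 1)\<^sup>2)"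
    proof (intro sum_mono power_mono)
      fix w assume "w \<in> e"
      then show "real (deg E2 w) - 1 \<le> real (deg E1 w) - 1" "0 \<le> real (deg E2 w) - 1"
        using a b by auto
    qed
    then show "R1 e - R2 e \<ge> 0" unfolding R1_def R2_def by simp
  qed
  define D where "D = real (deg E1 u1)"
  define X where "X = real (deg E1 x)"
  define c where "c = real (deg E1 z)"
  have Dv: "D = 1 \<or> D = 2" using degu unfolding D_def by auto
  have Xv: "X \<ge> 3" using degx unfolding X_def by simp
  have cv: "c \<ge> 2" using z(5) unfolding c_def by simp
  have x2: "real (deg E2 x) = X - 1" using d2x unfolding X_def by (metis add_diff_cancel_right' of_nat_1 of_nat_add)
  have F: "F1 p = sqrt (D^2 + X^2)" "F2 q = sqrt (D^2 + 2^2)"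
      "F1 g = sqrt (c^2 + 1^2)" "F2 g = sqrt (c^2 + 2^2)"
    unfolding F1_def F2_def p_def q_def g_def D_def X_def c_def
    using ne z(2) d2u d2vl d2z dvl1 by simp_all
  have R: "R1 p = sqrt ((D-1)^2 + (X-1)^2)" "R2 q = sqrt ((D-1)^2 + (2-1)^2)"
      "R1 g = sqrt ((c-1)^2 + (1-1)^2)" "R2 g = sqrt ((c-1)^2 + (2-1)^2)"
    unfolding R1_def R2_def p_def q_def g_def D_def X_def c_def
    using ne z(2) d2u d2vl d2z dvl1 by simp_all
  have "SO E1 - SO E2 > 0" using dec1 nn1 num1[OF Dv Xv cv] unfolding F by linarith
  moreover have "SO_red E1 - SO_red E2 > 0" using dec2 nn2 num2[OF Dv Xv cv] unfolding R by linarith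
  ultimately show ?thesis by simp
qed

end
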